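(* Let $\mathcal G$ be a Lie superalgebra over a field of characteristic zero, let $\mathcal S$ be the space of symmetric operators on $\mathcal G$ and $[\cdot,\cdot]$ the extended bracket described below, and let $1$ denote the identity map of $\mathcal G$. If $A\in\mathcal S$, then for every integer $k\ge1$ the element $[A,k]=[\cdots[[A,1],1],\ldots,1]$ (with $1$ appearing $k$ times) also lies in $\mathcal S$.
   Context: Set $\mathcal U_1=\mathcal G$ with its $\mathbb Z_2$-grading. For $p\ge1$ define recursively $\mathcal U_{-p+1}=\mathrm{Hom}(\mathcal U_1,\mathcal U_{-p+2})$, $\mathbb Z_2$-graded by declaring $A$ even (resp. odd) if it preserves (resp. reverses) parity; $|u|$ is the parity of a homogeneous element. Elements of $\mathcal U_{1-p}$ are operators of order $p$ (elements of $\mathcal G$ have order $0$), identified for $p\ge1$ with $p$-linear maps $A(x_1,\dots,x_p)=A(x_1)\cdots(x_p)$; $\mathcal U_{1-}=\bigoplus_{p\ge0}\mathcal U_{1-p}$. The identity map $1$ is an even operator of order $1$. An operator of order $p\ge2$ is symmetric if $A(\dots,x_i,x_{i+1},\dots)=(-1)^{|x_i||x_{i+1}|}A(\dots,x_{i+1},x_i,\dots)$ for all homogeneous arguments and all $i$; operators of order $0$ or $1$ are symmetric; $\mathcal S$ is the span of symmetric operators. Define $\circ$: $A\circ y=A(y)$, $y\circ A=0$ for $A$ of order $\ge1$, $y\in\mathcal U_1$; for $A,B$ of orders $\ge1$, recursively $(A\circ B)(x)=A\circ B(x)+(-1)^{|B||x|}A(x)\circ B$. Define $\bullet$: $A_p\bullet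 B_q=\frac{p!q!}{(p+q-1)!}A_p\circ B_q$ for orders $p,q\ge1$; $A_p\bullet x=pA_p(x)$, $x\bullet A_p=0$, $x\bullet y=0$ for $x,y\in\mathcal U_1$. The bracket of $\mathcal G$ extends to $\mathcal U_{1-}$: on $\mathcal G$ it is the given bracket, and for operators $A,B$ of orders $p,q$ with $p+q\ge1$, $[A,B]$ is the operator of order $p+q$ defined recursively by $[A,B]\bullet x=[A,B\bullet x]+(-1)^{|x||B|}[A\bullet x,B]$ for all $x\in\mathcal G$. *)

theory Defs
  imports Main "HOL.Vector_Spaces"
begin

text \<open>Parity of homogeneous elements is encoded as bool: False = even, True = odd;
  addition of parities is exclusive or, i.e. (\<noteq>).\<close>

definition sgnsc :: "bool \<Rightarrow> 'v::ab_group_add \<Rightarrow> 'v" where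
  "sgnsc b v = (if b then - v else v)"

definition xorl :: "bool list \<Rightarrow> bool" where
  "xorl es = foldr (\<noteq>) es False"

locale lie_superalgebra = vector_space scale
  for scale :: "'k::field_char_0 \<Rightarrow> 'v::ab_group_add \<Rightarrow> 'v" +
  fixes Ev Od :: "'v set"
    and lb :: "'v \<Rightarrow> 'v \<Rightarrow> 'v"
  assumes sub_Ev: "subspace Ev" and sub_Od: "subspace Od"
    and dsum: "\<And>v. \<exists>a b. a \<in> Ev \<and> b \<in> Od \<and> v = a + b"
    and dsum0: "Ev \<inter> Od = {0}"
    and lb_add_left: "\<And>x y z. lb (x + y) z = lb x z + lb y z"
    and lb_add_right: "\<And>x y z. lb x (y + z) = lb x y + lb x z"
    and lb_scale_left: "\<And>c x y. lb (scale c x) y = scale c (lb x y)"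
    and lb_scale_right: "\<And>c x y. lb x (scale c y) = scale c (lb x y)"
    and lb_graded: "\<And>x y e d. x \<in> (if e then Od else Ev) \<Longrightarrow> y \<in> (if d then Od else Ev)
        \<Longrightarrow> lb x y \<in> (if e \<noteq> d then Od else Ev)"
    and lb_antisym: "\<And>x y e d. x \<in> (if e then Od else Ev) \<Longrightarrow> y \<in> (if d then Od else Ev)
        \<Longrightarrow> lb x y = - sgnsc (e \<and> d) (lb y x)"
    and lb_jacobi: "\<And>x y z e d. x \<in> (if e then Od else Ev) \<Longrightarrow> y \<in> (if d then Od else Ev)
        \<Longrightarrow> lb x (lb y z) = lb (lb x y) z + sgnsc (e \<and> d) (lb y (lb x z))"
begin

definition par :: "bool \<Rightarrow> 'v set" where
  "par e = (if e then Od else Ev)"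

definition proj :: "bool \<Rightarrow> 'v \<Rightarrow> 'v" where
  "proj e v = (THE a. a \<in> par e \<and> v - a \<in> par (\<not> e))"

text \<open>Operators: an operator of order p is a p-linear map, represented as a function
  on lists of arguments, A(x1,...,xp) = A [x1,...,xp], which vanishes on lists of
  other lengths. Partial application A(x) is \<open>\<lambda>ys. A (x # ys)\<close>.
  An element of U_{1-} (finite sum of operators of various orders) is represented as
  one function whose restriction to lists of length p is its order-p component.\<close>

definition is_op :: "nat \<Rightarrow> ('v list \<Rightarrow> 'v) \<Rightarrow> bool" where
  "is_op p A \<longleftrightarrow> (\<forall>xs. length xs \<noteq> p \<longrightarrow> A xs = 0) \<and>
     (\<forall>ys zs x y. length ys + length zs + 1 = p \<longrightarrow>
         A (ys @ (x + y) # zs) = A (ys @ x # zs) + A (ys @ y # zs)) \<and>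
     (\<forall>ys zs x c. length ys + length zs + 1 = p \<longrightarrow>
         A (ys @ scale c x # zs) = scale c (A (ys @ x # zs)))"

text \<open>Parity-d component of an operator (even part preserves, odd part reverses parity).\<close>
definition opcomp :: "bool \<Rightarrow> ('v list \<Rightarrow> 'v) \<Rightarrow> 'v list \<Rightarrow> 'v" where
  "opcomp d B xs = (\<Sum>es\<in>{es. length es = length xs}.
      proj (d \<noteq> xorl es) (B (map2 proj es xs)))"

definition symmetric :: "nat \<Rightarrow> ('v list \<Rightarrow> 'v) \<Rightarrow> bool" where
  "symmetric p A \<longleftrightarrow> (\<forall>ys zs x y e d. length ys + length zs + 2 = p \<longrightarrow>
      x \<in> par e \<longrightarrow> y \<in> par d \<longrightarrow>
      A (ys @ x # y # zs) = sgnsc (e \<and> d) (A (ys @ y # x # zs)))"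

inductive_set Sspan :: "('v list \<Rightarrow> 'v) set" where
  zero: "(\<lambda>_. 0) \<in> Sspan"
| sym: "is_op p A \<Longrightarrow> symmetric p A \<Longrightarrow> A \<in> Sspan"
| add: "A \<in> Sspan \<Longrightarrow> B \<in> Sspan \<Longrightarrow> (\<lambda>xs. A xs + B xs) \<in> Sspan"
| smult: "A \<in> Sspan \<Longrightarrow> (\<lambda>xs. scale c (A xs)) \<in> Sspan"

text \<open>The extended bracket [A,B] of an operator A of order p and B of order q,
  as an operator of order p+q.  For p+q \<ge> 1 it is determined by
  [A,B]\<bullet>x = (p+q)[A,B](x) = [A,B\<bullet>x] + (-1)^{|x||B|}[A\<bullet>x,B], with
  A\<bullet>x = p A(x) (zero if p = 0), extended linearly in x and B via the
  parity decompositions.\<close>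
fun ebr :: "nat \<Rightarrow> nat \<Rightarrow> ('v list \<Rightarrow> 'v) \<Rightarrow> ('v list \<Rightarrow> 'v) \<Rightarrow> 'v list \<Rightarrow> 'v" where
  "ebr p q A B [] = (if p + q = 0 then lb (A []) (B []) else 0)"
| "ebr p q A B (x # ys) =
     (if p + q \<noteq> Suc (length ys) then 0 else
      scale (1 / of_nat (p + q))
       ((if q = 0 then 0 else
           ebr p (q - 1) A (\<lambda>zs. scale (of_nat q) (B (x # zs))) ys)
        + (if p = 0 then 0 else
           ebr (p - 1) q (\<lambda>zs. scale (of_nat p) (A (proj False x # zs))) (opcomp False B) ys
         + ebr (p - 1) q (\<lambda>zs. scale (of_nat p) (A (proj False x # zs))) (opcomp True B) ys
         + ebr (p - 1) q (\<lambda>zs. scale (of_nat p) (A (proj True x # zs))) (opcomp False B) ys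
         - ebr (p - 1) q (\<lambda>zs. scale (of_nat p) (A (proj True x # zs))) (opcomp True B) ys)))"

definition comp :: "nat \<Rightarrow> ('v list \<Rightarrow> 'v) \<Rightarrow> 'v list \<Rightarrow> 'v" where
  "comp p F xs = (if length xs = p then F xs else 0)"

definition ubr :: "('v list \<Rightarrow> 'v) \<Rightarrow> ('v list \<Rightarrow> 'v) \<Rightarrow> 'v list \<Rightarrow> 'v" where
  "ubr F G xs = (\<Sum>p\<le>length xs. ebr p (length xs - p) (comp p F) (comp (length xs - p) G) xs)"

definition one :: "'v list \<Rightarrow> 'v" where
  "one xs = (case xs of [x] \<Rightarrow> x | _ \<Rightarrow> 0)"

definition iter_one :: "('v list \<Rightarrow> 'v) \<Rightarrow> nat \<Rightarrow> 'v list \<Rightarrow> 'v" where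
  "iter_one A k = ((\<lambda>F. ubr F one) ^^ k) A"

end

end

theory Submission
  imports Defs
begin

context lie_superalgebra begin

lemma par_sub: "subspace (par e)" by (simp add: par_def sub_Ev sub_Od)
lemma par0: "0 \<in> par e" using subspace_0[OF par_sub] .
lemma par_add: "x \<in> par e \<Longrightarrow> y \<in> par e \<Longrightarrow> x + y \<in> par e" using subspace_add[OF par_sub] .
lemma par_diff: "x \<in> par e \<Longrightarrow> y \<in> par e \<Longrightarrow> x - y \<in> par e" using subspace_diff[OF par_sub] .
lemma par_neg: "x \<in> par e \<Longrightarrow> - x \<in> par e" using subspace_neg[OF par_sub] .
lemma par_scale: "x \<in> par e \<Longrightarrow> scale c x \<in> par e" using subspace_scale[OF par_sub] .
lemma par_inter: "x \<in> par e \<Longrightarrow> x \<in> par (\<not> e) \<Longrightarrow> x = 0"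
  using dsum0 by (cases e) (auto simp: par_def)

lemma proj_ex: "\<exists>a. a \<in> par e \<and> v - a \<in> par (\<not> e)"
proof -
  obtain a b where ab: "a \<in> Ev" "b \<in> Od" "v = a + b" using dsum by blast
  show ?thesis
  proof (cases e)
    case True then show ?thesis using ab by (intro exI[of _ b]) (auto simp: par_def)
  next
    case False then show ?thesis using ab by (intro exI[of _ a]) (auto simp: par_def)
  qed
qed

lemma proj_uniq: assumes "a \<in> par e" "v - a \<in> par (\<not> e)" "a' \<in> par e" "v - a' \<in> par (\<not> e)"
  shows "a = a'"
proof -
  have "a - a' \<in> par e" using assms par_diff by blast
  moreover have "(v - a') - (v - a) \<in> par (\<not> e)" using assms par_diff by blast
  moreover have "(v - a') - (v - a) = a - a'" by (simp add: algebra_simps)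
  ultimately show ?thesis using par_inter by fastforce
qed

lemma proj_char: "proj e v \<in> par e \<and> v - proj e v \<in> par (\<not> e)"
  unfolding proj_def by (rule theI') (use proj_ex proj_uniq in blast)

lemma proj_in: "proj e v \<in> par e" using proj_char by blast

lemma proj_unique: "a \<in> par e \<Longrightarrow> v - a \<in> par (\<not> e) \<Longrightarrow> proj e v = a"
  using proj_char proj_uniq by blast

lemma proj_id: "v \<in> par e \<Longrightarrow> proj e v = v"
  by (rule proj_unique) (auto simp: par0)

lemma proj_other: "v \<in> par e \<Longrightarrow> proj (\<not> e) v = 0"
  by (rule proj_unique) (auto simp: par0)

lemma proj_other': "v \<in> par (\<not> e) \<Longrightarrow> proj e v = 0"
  using proj_other[of v "\<not> e"] by simp

lemma proj_sum: "proj False v + proj True v = v"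
proof -
  have "proj True v = v - proj False v"
    using proj_char[of False v] by (intro proj_unique) auto
  then show ?thesis by simp
qed

lemma proj_add: "proj e (v + w) = proj e v + proj e w"
  apply (rule proj_unique)
  using proj_char[of e v] proj_char[of e w]
   apply (auto intro: par_add)
  apply (subgoal_tac "v + w - (proj e v + proj e w) = (v - proj e v) + (w - proj e w)")
   apply (metis par_add)
  apply (simp add: algebra_simps)
  done

lemma proj_scale: "proj e (scale c v) = scale c (proj e v)"
  apply (rule proj_unique)
  using proj_char[of e v]
   apply (auto intro: par_scale)
  apply (subgoal_tac "scale c v - scale c (proj e v) = scale c (v - proj e v)")
   apply (metis par_scale)
  apply (simp add: scale_right_diff_distrib)
  done

lemma proj_neg: "proj e (- v) = - proj e v"
  using proj_scale[of e "-1" v] by simp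

lemma proj_diff: "proj e (v - w) = proj e v - proj e w"
  using proj_add[of e v "- w"] proj_neg by simp

lemma proj_zero[simp]: "proj e 0 = 0" using proj_id par0 by blast

lemma proj_proj[simp]: "proj e (proj e v) = proj e v" using proj_id proj_in by blast
lemma proj_proj'[simp]: "proj (\<not> e) (proj e v) = 0" using proj_other proj_in by blast
lemma proj_proj_FT[simp]: "proj False (proj True v) = 0" "proj True (proj False v) = 0"
  using proj_proj'[of True v] proj_proj'[of False v] by auto

end

context lie_superalgebra begin

lemma lb_zero_left[simp]: "lb 0 y = 0"
  using lb_add_left[of 0 0 y] by simp
lemma lb_zero_right[simp]: "lb x 0 = 0"
  using lb_add_right[of x 0 0] by simp
lemma lb_neg_left: "lb (- x) y = - lb x y"
  using lb_add_left[of "-x" x y] by (simp add: eq_neg_iff_add_eq_0)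
lemma lb_neg_right: "lb x (- y) = - lb x y"
  using lb_add_right[of x "-y" y] by (simp add: eq_neg_iff_add_eq_0)
lemma lb_diff_left: "lb (x - y) z = lb x z - lb y z"
  using lb_add_left[of x "-y" z] lb_neg_left by simp
lemma lb_diff_right: "lb x (y - z) = lb x y - lb x z"
  using lb_add_right[of x y "-z"] lb_neg_right by simp

lemma sgnsc_add: "sgnsc b (x + y) = sgnsc b x + sgnsc b y" by (simp add: sgnsc_def)
lemma sgnsc_zero[simp]: "sgnsc b 0 = 0" by (simp add: sgnsc_def)
lemma scale_sgnsc: "scale c (sgnsc b v) = sgnsc b (scale c v)" by (simp add: sgnsc_def)
lemma lb_sgnsc_left: "lb (sgnsc b x) y = sgnsc b (lb x y)" by (simp add: sgnsc_def lb_neg_left)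
lemma sgnsc_sgnsc: "sgnsc b (sgnsc b v) = v" by (simp add: sgnsc_def)
lemma sgnsc_par: "v \<in> par e \<Longrightarrow> sgnsc b v \<in> par e" by (simp add: sgnsc_def par_neg)

definition Pm :: "'v \<Rightarrow> 'v" where "Pm v = proj False v - proj True v"

lemma Pm_add: "Pm (x + y) = Pm x + Pm y" by (simp add: Pm_def proj_add algebra_simps)
lemma Pm_scale: "Pm (scale c x) = scale c (Pm x)" by (simp add: Pm_def proj_scale scale_right_diff_distrib)
lemma Pm_par: "v \<in> par e \<Longrightarrow> Pm v = sgnsc e v"
  by (cases e) (auto simp: Pm_def sgnsc_def proj_id proj_other')
lemma Pm_in: "v \<in> par e \<Longrightarrow> Pm v \<in> par e" by (simp add: Pm_par sgnsc_par)
lemma Pm_decomp: "proj False x - proj True x = Pm x" by (simp add: Pm_def)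

lemma is_op_len: "is_op p A \<Longrightarrow> length xs \<noteq> p \<Longrightarrow> A xs = 0" by (simp add: is_op_def)
lemma is_op_add: "is_op p A \<Longrightarrow> length ys + length zs + 1 = p \<Longrightarrow>
   A (ys @ (x + y) # zs) = A (ys @ x # zs) + A (ys @ y # zs)" by (simp add: is_op_def)
lemma is_op_scale: "is_op p A \<Longrightarrow> length ys + length zs + 1 = p \<Longrightarrow>
   A (ys @ scale c x # zs) = scale c (A (ys @ x # zs))" by (simp add: is_op_def)
lemma is_op_neg: "is_op p A \<Longrightarrow> length ys + length zs + 1 = p \<Longrightarrow>
   A (ys @ (- x) # zs) = - (A (ys @ x # zs))" using is_op_scale[of p A ys zs "-1" x] by simp
lemma is_op_sgnsc: "is_op p A \<Longrightarrow> length ys + length zs + 1 = p \<Longrightarrow>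
   A (ys @ sgnsc b x # zs) = sgnsc b (A (ys @ x # zs))" by (simp add: sgnsc_def is_op_neg)
lemma is_op_diff: "is_op p A \<Longrightarrow> length ys + length zs + 1 = p \<Longrightarrow>
   A (ys @ (x - y) # zs) = A (ys @ x # zs) - A (ys @ y # zs)"
  using is_op_add[of p A ys zs x "-y"] is_op_neg[of p A ys zs y] by simp

lemma is_op_add1: "is_op p A \<Longrightarrow> A ((x + y) # zs) = A (x # zs) + A (y # zs)"
  using is_op_add[of p A "[]" zs x y] is_op_len[of p A "(x+y)#zs"] is_op_len[of p A "x#zs"] is_op_len[of p A "y#zs"]
  by (cases "length zs + 1 = p") auto
lemma is_op_scale1: "is_op p A \<Longrightarrow> A (scale c x # zs) = scale c (A (x # zs))"
  using is_op_scale[of p A "[]" zs c x] is_op_len[of p A "scale c x#zs"] is_op_len[of p A "x#zs"]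
  by (cases "length zs + 1 = p") auto
lemma is_op_diff1: "is_op p A \<Longrightarrow> A ((x - y) # zs) = A (x # zs) - A (y # zs)"
  using is_op_diff[of p A "[]" zs x y] is_op_len[of p A "(x-y)#zs"] is_op_len[of p A "x#zs"] is_op_len[of p A "y#zs"]
  by (cases "length zs + 1 = p") auto
lemma is_op_sgnsc1: "is_op p A \<Longrightarrow> A (sgnsc b x # zs) = sgnsc b (A (x # zs))"
  using is_op_sgnsc[of p A "[]" zs b x] is_op_len[of p A "sgnsc b x#zs"] is_op_len[of p A "x#zs"]
  by (cases "length zs + 1 = p") auto

lemma is_op_cons: assumes "is_op (Suc n) A" shows "is_op n (\<lambda>zs. scale c (A (v # zs)))"
  unfolding is_op_def
proof (intro conjI allI impI)
  fix xs :: "'v list" assume "length xs \<noteq> n"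
  then show "scale c (A (v # xs)) = 0" using is_op_len[OF assms, of "v # xs"] by simp
next
  fix ys zs :: "'v list" and x y assume "length ys + length zs + 1 = n"
  then show "scale c (A (v # ys @ (x + y) # zs)) = scale c (A (v # ys @ x # zs)) + scale c (A (v # ys @ y # zs))"
    using is_op_add[OF assms, of "v # ys" zs x y] by (simp add: scale_right_distrib)
next
  fix ys zs :: "'v list" and x d assume "length ys + length zs + 1 = n"
  then show "scale c (A (v # ys @ scale d x # zs)) = scale d (scale c (A (v # ys @ x # zs)))"
    using is_op_scale[OF assms, of "v # ys" zs d x] by (simp add: mult.commute)
qed

lemma symmetric_cons: assumes "symmetric (Suc n) A" shows "symmetric n (\<lambda>zs. scale c (A (v # zs)))"
  unfolding symmetric_def
proof (intro allI impI)
  fix ys zs :: "'v list" and x y e d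
  assume "length ys + length zs + 2 = n" "x \<in> par e" "y \<in> par d"
  then show "scale c (A (v # ys @ x # y # zs)) = sgnsc (e \<and> d) (scale c (A (v # ys @ y # x # zs)))"
    using assms unfolding symmetric_def
    by (metis (no_types, lifting) Cons_eq_appendI add_Suc length_Cons scale_sgnsc)
qed

lemma one_single[simp]: "one [x] = x" by (simp add: one_def)

lemma one_len: "length xs \<noteq> 1 \<Longrightarrow> one xs = 0"
  by (auto simp: one_def split: list.split)

lemma opcomp_nil: "opcomp d B [] = proj d (B [])"
  by (simp add: opcomp_def xorl_def)

lemma opcomp_zero: "(\<And>xs. B xs = 0) \<Longrightarrow> opcomp d B xs = 0"
  by (simp add: opcomp_def)

lemma len1: "{es::bool list. length es = Suc 0} = {[False],[True]}"
  by (auto simp: length_Suc_conv)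

lemma opcomp_one: "opcomp False one = one" "opcomp True one = (\<lambda>_. 0)"
proof -
  have A: "opcomp d one xs = 0" if "length xs \<noteq> 1" for d xs
    unfolding opcomp_def using that by (intro sum.neutral) (auto simp: one_len)
  have B: "opcomp d one [x] = (if d then 0 else x)" for d x
    unfolding opcomp_def using proj_sum[of x]
    by (simp add: len1 xorl_def one_def)
  show "opcomp False one = one"
  proof
    fix xs show "opcomp False one xs = one xs"
      by (cases "length xs = 1") (auto simp: A one_len B length_Suc_conv)
  qed
  show "opcomp True one = (\<lambda>_. 0)"
  proof
    fix xs show "opcomp True one xs = 0"
      by (cases "length xs = 1") (auto simp: A B length_Suc_conv)
  qed
qed

lemma ebr_len: "length xs \<noteq> p + q \<Longrightarrow> ebr p q A B xs = 0"
  by (cases xs) auto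

lemma ebr_zeroB: "(\<And>zs. B zs = 0) \<Longrightarrow> ebr p q A B xs = 0"
proof (induction xs arbitrary: p q A B)
  case Nil then show ?case by simp
next
  case (Cons x ys)
  have h1: "ebr p' q' A' (\<lambda>zs. scale c (B (x # zs))) ys = 0" for p' q' A' c
    by (rule Cons.IH) (simp add: Cons.prems)
  have h2: "ebr p' q' A' (opcomp d B) ys = 0" for p' q' A' d
    by (rule Cons.IH) (simp add: Cons.prems opcomp_zero)
  show ?case unfolding ebr.simps h1 h2 by simp
qed

lemma ebr_addA: "(\<And>zs. A'' zs = A zs + A' zs) \<Longrightarrow> ebr p q A'' B xs = ebr p q A B xs + ebr p q A' B xs"
proof (induction xs arbitrary: p q A A' A'' B)
  case Nil then show ?case by (simp add: lb_add_left)
next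
  case (Cons x ys)
  have h1: "ebr p' q' A'' B' ys = ebr p' q' A B' ys + ebr p' q' A' B' ys" for p' q' B'
    by (rule Cons.IH) (simp add: Cons.prems)
  have h2: "ebr p' q' (\<lambda>zs. scale c (A'' (v # zs))) B' ys = ebr p' q' (\<lambda>zs. scale c (A (v # zs))) B' ys
     + ebr p' q' (\<lambda>zs. scale c (A' (v # zs))) B' ys" for p' q' B' c v
    by (rule Cons.IH) (simp add: Cons.prems scale_right_distrib)
  show ?case unfolding ebr.simps h1 h2 by (simp add: algebra_simps)
qed

lemma ebr_scaleA: "(\<And>zs. A' zs = scale c (A zs)) \<Longrightarrow> ebr p q A' B xs = scale c (ebr p q A B xs)"
proof (induction xs arbitrary: p q A A' B)
  case Nil then show ?case by (simp add: lb_scale_left)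
next
  case (Cons x ys)
  have h1: "ebr p' q' A' B' ys = scale c (ebr p' q' A B' ys)" for p' q' B'
    by (rule Cons.IH) (simp add: Cons.prems)
  have h2: "ebr p' q' (\<lambda>zs. scale d (A' (v # zs))) B' ys = scale c (ebr p' q' (\<lambda>zs. scale d (A (v # zs))) B' ys)" for p' q' B' d v
    by (rule Cons.IH) (simp add: Cons.prems mult.commute)
  show ?case unfolding ebr.simps h1 h2 by (simp add: algebra_simps)
qed

lemma ebr_zeroA: "(\<And>zs. A zs = 0) \<Longrightarrow> ebr p q A B xs = 0"
  using ebr_scaleA[of A 0 A p q B xs] by simp

lemma ebr_sgnscA: "ebr p q A' B xs = sgnsc b (ebr p q A B xs)" if "\<And>zs. A' zs = sgnsc b (A zs)"
proof (cases b)
  case True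
  then show ?thesis using ebr_scaleA[of A' "-1" A p q B xs] that by (simp add: sgnsc_def)
next
  case False
  then have "A' = A" using that by (simp add: sgnsc_def fun_eq_iff)
  then show ?thesis using False by (simp add: sgnsc_def)
qed

end

context lie_superalgebra begin

declare ebr.simps(2)[simp del]

lemma scale_inv_N: "scale (1 / of_nat (Suc n)) (scale (of_nat (Suc n)) v) = v"
proof -
  have "(1 / of_nat (Suc n) :: 'k) * of_nat (Suc n) = 1" by (simp del: of_nat_Suc)
  then show ?thesis by simp
qed

lemma ebr0: "is_op p A \<Longrightarrow> ebr p 0 A B xs =
   (if length xs = p then lb (A xs) (proj False (B [])) + lb (A (map Pm xs)) (proj True (B [])) else 0)"
proof (induction p arbitrary: A B xs)
  case 0
  then show ?case
  proof (cases xs)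
    case Nil
    then show ?thesis using proj_sum[of "B []"] by (simp add: lb_add_right[symmetric])
  qed (simp add: ebr_len)
next
  case (Suc n)
  show ?case
  proof (cases "length xs = Suc n")
    case False then show ?thesis by (simp add: ebr_len)
  next
    case True
    then obtain x ys where xs: "xs = x # ys" and len: "length ys = n" by (cases xs) auto
    define N :: 'k where "N = of_nat (Suc n)"
    define c where "c = B []"
    have IHe: "ebr n 0 (\<lambda>zs. scale N (A (proj e x # zs))) (opcomp d B) ys =
       lb (scale N (A (proj e x # ys))) (proj False (proj d c)) + lb (scale N (A (proj e x # map Pm ys))) (proj True (proj d c))" for e d
      using Suc.IH[OF is_op_cons[OF Suc.prems], of N "proj e x" "opcomp d B" ys] len
      by (simp add: opcomp_nil c_def)
    have a: "A (x # ys) = A (proj False x # ys) + A (proj True x # ys)"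
      using is_op_add1[OF Suc.prems, of "proj False x" "proj True x" ys] proj_sum[of x] by simp
    have b: "A (Pm x # map Pm ys) = A (proj False x # map Pm ys) - A (proj True x # map Pm ys)"
      using is_op_diff1[OF Suc.prems] by (simp add: Pm_def)
    have "ebr (Suc n) 0 A B xs = scale (1 / N) (
        lb (scale N (A (proj False x # ys))) (proj False c) + lb (scale N (A (proj False x # map Pm ys))) (proj True c)
      + lb (scale N (A (proj True x # ys))) (proj False c) - lb (scale N (A (proj True x # map Pm ys))) (proj True c))"
      unfolding xs ebr.simps using len IHe[folded N_def] by (simp add: N_def)
    also have "\<dots> = scale (1 / N) (scale N (lb (A (x # ys)) (proj False c) + lb (A (Pm x # map Pm ys)) (proj True c)))"
      unfolding a b by (simp add: lb_scale_left lb_add_left lb_diff_left scale_right_distrib scale_right_diff_distrib algebra_simps del: scale_scale)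
    also have "\<dots> = lb (A (x # ys)) (proj False c) + lb (A (Pm x # map Pm ys)) (proj True c)"
      unfolding N_def by (rule scale_inv_N)
    finally show ?thesis using xs len c_def by simp
  qed
qed


definition Zf :: "('v list \<Rightarrow> 'v) \<Rightarrow> 'v \<Rightarrow> 'v list \<Rightarrow> 'v" where
  "Zf A x ys = lb (A ys) (proj False x) + lb (A (map Pm ys)) (proj True x)"

lemma Zf_par: "x \<in> par e \<Longrightarrow> Zf A x w = (if e then lb (A (map Pm w)) x else lb (A w) x)"
  by (cases e) (auto simp: Zf_def proj_id proj_other')

lemma scale_N_inv: "scale (of_nat (Suc n)) (scale (1 / of_nat (Suc n)) v) = v"
proof -
  have "(of_nat (Suc n) :: 'k) * (1 / of_nat (Suc n)) = 1" by (simp del: of_nat_Suc)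
  then show ?thesis by simp
qed

lemma is_op_cons1: "is_op (Suc n) A \<Longrightarrow> is_op n (\<lambda>zs. A (v # zs))"
  using is_op_cons[of n A 1 v] by simp

lemma symmetric_cons1: "symmetric (Suc n) A \<Longrightarrow> symmetric n (\<lambda>zs. A (v # zs))"
  using symmetric_cons[of n A 1 v] by simp

lemma R1: assumes A: "is_op p A" and len: "length ys = p"
  shows "ebr p 1 A one (x # ys) = scale (1 / of_nat (Suc p))
     (Zf A x ys + (if p = 0 then 0 else scale (of_nat p) (ebr (p - 1) 1 (\<lambda>zs. A (x # zs)) one ys)))"
proof -
  have e0: "ebr p 0 A (\<lambda>zs. scale (of_nat 1) (one (x # zs))) ys = Zf A x ys"
    using ebr0[OF A] len by (simp add: Zf_def)
  have z: "ebr p' q' A' (\<lambda>_. 0) ys = 0" for p' q' A'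
    by (rule ebr_zeroB) simp
  have s1: "ebr (p - Suc 0) (Suc 0) (\<lambda>zs. scale (of_nat p) (A (x # zs))) one ys =
     ebr (p - Suc 0) (Suc 0) (\<lambda>zs. scale (of_nat p) (A (proj False x # zs))) one ys
   + ebr (p - Suc 0) (Suc 0) (\<lambda>zs. scale (of_nat p) (A (proj True x # zs))) one ys"
    by (rule ebr_addA) (simp add: is_op_add1[OF A, symmetric] proj_sum scale_right_distrib[symmetric])
  have s2: "ebr (p - Suc 0) (Suc 0) (\<lambda>zs. scale (of_nat p) (A (x # zs))) one ys =
     scale (of_nat p) (ebr (p - Suc 0) (Suc 0) (\<lambda>zs. A (x # zs)) one ys)"
    by (rule ebr_scaleA) simp
  show ?thesis
    unfolding ebr.simps using len e0
    by (simp add: z opcomp_one s1[symmetric] s2)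
qed

lemma is_op_neg1: "is_op p A \<Longrightarrow> A ((- x) # zs) = - A (x # zs)"
  using is_op_scale1[of p A "-1" x zs] by simp

lemma Zf_swap: assumes A: "is_op p A" and x: "x \<in> par e" and y: "y \<in> par d"
  shows "Zf A x (y # zs) + Zf (\<lambda>w. A (x # w)) y zs =
    sgnsc (e \<and> d) (Zf A y (x # zs) + Zf (\<lambda>w. A (y # w)) x zs)"
  using x y Pm_par[OF x] Pm_par[OF y]
  by (cases e; cases d) (simp_all add: Zf_par is_op_sgnsc1[OF A] is_op_neg1[OF A] sgnsc_def lb_neg_left algebra_simps)


lemma sgnsc_scale': "sgnsc b (scale c v) = scale c (sgnsc b v)" by (simp add: sgnsc_def)

lemma sg_comb1: "scale c (sgnsc b a + scale N (sgnsc b r)) = sgnsc b (scale c (a + scale N r))"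
  by (cases b) (simp_all add: sgnsc_def scale_right_distrib scale_right_diff_distrib)

lemma sg_comb2: "scale c (sgnsc b a + (if n = (0::nat) then 0 else scale N (sgnsc b r))) =
   sgnsc b (scale c (a + (if n = 0 then 0 else scale N r)))"
  by (cases b) (simp_all add: sgnsc_def scale_right_distrib scale_right_diff_distrib)

lemma sym_R: "is_op p A \<Longrightarrow> symmetric p A \<Longrightarrow> symmetric (Suc p) (ebr p 1 A one)"
proof (induction p arbitrary: A)
  case 0
  then show ?case by (simp add: symmetric_def)
next
  case (Suc n)
  note A = Suc.prems(1) and S = Suc.prems(2)
  show ?case unfolding symmetric_def
  proof (intro allI impI)
    fix ys zs :: "'v list" and x y :: 'v and e d :: bool
    assume len: "length ys + length zs + 2 = Suc (Suc n)" and x: "x \<in> par e" and y: "y \<in> par d"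
    show "ebr (Suc n) 1 A one (ys @ x # y # zs) = sgnsc (e \<and> d) (ebr (Suc n) 1 A one (ys @ y # x # zs))"
    proof (cases ys)
      case Nil
      then have lz: "length zs = n" using len by simp
      define N2 :: 'k where "N2 = of_nat (Suc (Suc n))"
      have two: "ebr (Suc n) 1 A one (u # v # zs) = scale (1 / N2) (Zf A u (v # zs) + Zf (\<lambda>w. A (u # w)) v zs
          + (if n = 0 then 0 else scale (of_nat n) (ebr (n - 1) 1 (\<lambda>w. A (u # v # w)) one zs)))" for u v
      proof -
        have "ebr (Suc n) 1 A one (u # v # zs) = scale (1 / N2) (Zf A u (v # zs) + scale (of_nat (Suc n)) (ebr n 1 (\<lambda>w. A (u # w)) one (v # zs)))"
          using R1[OF A, where ys="v # zs" and x=u] lz by (simp add: N2_def)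
        also have "ebr n 1 (\<lambda>w. A (u # w)) one (v # zs) = scale (1 / of_nat (Suc n)) (Zf (\<lambda>w. A (u # w)) v zs
          + (if n = 0 then 0 else scale (of_nat n) (ebr (n - 1) 1 (\<lambda>w. A (u # v # w)) one zs)))"
          using R1[OF is_op_cons1[OF A], where ys=zs and x=v] lz by simp
        finally show ?thesis by (simp only: scale_N_inv add.assoc)
      qed
      have r: "ebr (n - 1) 1 (\<lambda>w. A (x # y # w)) one zs = sgnsc (e \<and> d) (ebr (n - 1) 1 (\<lambda>w. A (y # x # w)) one zs)"
      proof (rule ebr_sgnscA)
        fix w
        show "A (x # y # w) = sgnsc (e \<and> d) (A (y # x # w))"
        proof (cases "length w + 2 = Suc n")
          case True
          then show ?thesis using S[unfolded symmetric_def, rule_format, of "[]" w x e y d] x y by simp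
        next
          case False
          then show ?thesis using is_op_len[OF A, of "x # y # w"] is_op_len[OF A, of "y # x # w"] by simp
        qed
      qed
      show ?thesis
        unfolding Nil append_Nil two Zf_swap[OF A x y] r sg_comb2 ..
    next
      case (Cons w ys')
      define L where "L = ys' @ x # y # zs"
      define L' where "L' = ys' @ y # x # zs"
      have lL: "length L = Suc n" "length L' = Suc n" using len Cons by (auto simp: L_def L'_def)
      have IH: "symmetric (Suc n) (ebr n 1 (\<lambda>zs. A (w # zs)) one)"
        by (rule Suc.IH[OF is_op_cons1[OF A] symmetric_cons1[OF S]])
      have l2: "length ys' + length zs + 2 = Suc n" using len Cons by simp
      have i1: "ebr n 1 (\<lambda>zs. A (w # zs)) one L = sgnsc (e \<and> d) (ebr n 1 (\<lambda>zs. A (w # zs)) one L')"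
        using IH x y l2 unfolding symmetric_def L_def L'_def by blast
      have a1: "A L = sgnsc (e \<and> d) (A L')"
        using S x y l2 unfolding symmetric_def L_def L'_def by blast
      have a2: "A (map Pm L) = sgnsc (e \<and> d) (A (map Pm L'))"
        using S[unfolded symmetric_def, rule_format, of "map Pm ys'" "map Pm zs" "Pm x" e "Pm y" d]
          Pm_in[OF x] Pm_in[OF y] l2 unfolding L_def L'_def by simp
      have zf: "Zf A w L = sgnsc (e \<and> d) (Zf A w L')"
        unfolding Zf_def a1 a2 by (simp add: lb_sgnsc_left sgnsc_add)
      have "ebr (Suc n) 1 A one (w # L) = scale (1 / of_nat (Suc (Suc n)))
          (Zf A w L + scale (of_nat (Suc n)) (ebr n 1 (\<lambda>zs. A (w # zs)) one L))"
        using R1[OF A lL(1), where x=w] by simp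
      moreover have "ebr (Suc n) 1 A one (w # L') = scale (1 / of_nat (Suc (Suc n)))
          (Zf A w L' + scale (of_nat (Suc n)) (ebr n 1 (\<lambda>zs. A (w # zs)) one L'))"
        using R1[OF A lL(2), where x=w] by simp
      ultimately show ?thesis
        unfolding Cons append_Cons L_def[symmetric] L'_def[symmetric] zf i1 sg_comb1 by simp
    qed
  qed
qed


lemma Zf_add_x: "Zf A (u + v) zs = Zf A u zs + Zf A v zs"
  by (simp add: Zf_def proj_add lb_add_right)
lemma Zf_scale_x: "Zf A (scale c u) zs = scale c (Zf A u zs)"
  by (simp add: Zf_def proj_scale lb_scale_right scale_right_distrib)

lemma Zf_add_in: assumes "is_op p A" "length ys + length zs + 1 = p"
  shows "Zf A w (ys @ (u + v) # zs) = Zf A w (ys @ u # zs) + Zf A w (ys @ v # zs)"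
  using is_op_add[OF assms] is_op_add[OF assms(1), of "map Pm ys" "map Pm zs" "Pm u" "Pm v"] assms(2)
  by (simp add: Zf_def Pm_add lb_add_left)

lemma Zf_scale_in: assumes "is_op p A" "length ys + length zs + 1 = p"
  shows "Zf A w (ys @ scale c u # zs) = scale c (Zf A w (ys @ u # zs))"
  using is_op_scale[OF assms, of c u] is_op_scale[OF assms(1), of "map Pm ys" "map Pm zs" c "Pm u"] assms(2)
  by (simp add: Zf_def Pm_scale lb_scale_left scale_right_distrib)

lemma addR_nil: assumes A: "is_op p A" and len: "length zs = p"
  shows "ebr p 1 A one ((u + v) # zs) = ebr p 1 A one (u # zs) + ebr p 1 A one (v # zs)"
proof -
  have e: "ebr (p - 1) 1 (\<lambda>w. A ((u + v) # w)) one zs = ebr (p - 1) 1 (\<lambda>w. A (u # w)) one zs + ebr (p - 1) 1 (\<lambda>w. A (v # w)) one zs"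
    by (rule ebr_addA) (simp add: is_op_add1[OF A])
  show ?thesis unfolding R1[OF A len] e Zf_add_x
    by (simp add: scale_right_distrib algebra_simps)
qed

lemma scaleR_nil: assumes A: "is_op p A" and len: "length zs = p"
  shows "ebr p 1 A one (scale c u # zs) = scale c (ebr p 1 A one (u # zs))"
proof -
  have e: "ebr (p - 1) 1 (\<lambda>w. A (scale c u # w)) one zs = scale c (ebr (p - 1) 1 (\<lambda>w. A (u # w)) one zs)"
    by (rule ebr_scaleA) (simp add: is_op_scale1[OF A])
  show ?thesis unfolding R1[OF A len] e Zf_scale_x
    by (simp add: scale_right_distrib mult.commute)
qed

lemma addR: "is_op p A \<Longrightarrow> length ys + length zs + 1 = Suc p \<Longrightarrow>
  ebr p 1 A one (ys @ (u + v) # zs) = ebr p 1 A one (ys @ u # zs) + ebr p 1 A one (ys @ v # zs)"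
proof (induction p arbitrary: A ys)
  case 0
  then show ?case using addR_nil[OF 0(1)] by simp
next
  case (Suc n)
  note A = Suc.prems(1)
  show ?case
  proof (cases ys)
    case Nil
    then show ?thesis using addR_nil[OF A] Suc.prems by simp
  next
    case (Cons w ys')
    have l: "length ys' + length zs + 1 = Suc n" using Suc.prems Cons by simp
    have IH: "ebr n 1 (\<lambda>z. A (w # z)) one (ys' @ (u + v) # zs) = ebr n 1 (\<lambda>z. A (w # z)) one (ys' @ u # zs) + ebr n 1 (\<lambda>z. A (w # z)) one (ys' @ v # zs)"
      using Suc.IH[OF is_op_cons1[OF A] l] .
    have R: "ebr (Suc n) 1 A one (w # ys' @ t # zs) = scale (1 / of_nat (Suc (Suc n)))
        (Zf A w (ys' @ t # zs) + scale (of_nat (Suc n)) (ebr n 1 (\<lambda>z. A (w # z)) one (ys' @ t # zs)))" for t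
      using R1[OF A, where ys="ys' @ t # zs" and x=w] l by simp
    show ?thesis unfolding Cons append_Cons R IH Zf_add_in[OF A l]
      by (simp add: scale_right_distrib algebra_simps)
  qed
qed

lemma scaleR: "is_op p A \<Longrightarrow> length ys + length zs + 1 = Suc p \<Longrightarrow>
  ebr p 1 A one (ys @ scale c u # zs) = scale c (ebr p 1 A one (ys @ u # zs))"
proof (induction p arbitrary: A ys)
  case 0
  then show ?case using scaleR_nil[OF 0(1)] by simp
next
  case (Suc n)
  note A = Suc.prems(1)
  show ?case
  proof (cases ys)
    case Nil
    then show ?thesis using scaleR_nil[OF A] Suc.prems by simp
  next
    case (Cons w ys')
    have l: "length ys' + length zs + 1 = Suc n" using Suc.prems Cons by simp
    have IH: "ebr n 1 (\<lambda>z. A (w # z)) one (ys' @ scale c u # zs) = scale c (ebr n 1 (\<lambda>z. A (w # z)) one (ys' @ u # zs))"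
      using Suc.IH[OF is_op_cons1[OF A] l] .
    have R: "ebr (Suc n) 1 A one (w # ys' @ t # zs) = scale (1 / of_nat (Suc (Suc n)))
        (Zf A w (ys' @ t # zs) + scale (of_nat (Suc n)) (ebr n 1 (\<lambda>z. A (w # z)) one (ys' @ t # zs)))" for t
      using R1[OF A, where ys="ys' @ t # zs" and x=w] l by simp
    show ?thesis unfolding Cons append_Cons R IH Zf_scale_in[OF A l]
      by (simp add: scale_right_distrib mult.commute)
  qed
qed

lemma is_op_R: "is_op p A \<Longrightarrow> is_op (Suc p) (ebr p 1 A one)"
  unfolding is_op_def[of "Suc p"]
  using addR scaleR by (auto simp: ebr_len)


lemma comp_one_ne: "m \<noteq> 1 \<Longrightarrow> comp m one = (\<lambda>_. 0)"
  by (auto simp: comp_def one_len fun_eq_iff)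

lemma comp_one_1: "comp 1 one = one"
  by (auto simp: comp_def one_len fun_eq_iff)

lemma ubr_one: "ubr F one xs = (if xs = [] then 0 else ebr (length xs - 1) 1 (comp (length xs - 1) F) one xs)"
proof -
  let ?n = "length xs"
  let ?g = "\<lambda>p. ebr p (?n - p) (comp p F) (comp (?n - p) one) xs"
  have z: "?g p = 0" if "?n - p \<noteq> 1" for p
    unfolding comp_one_ne[OF that] by (rule ebr_zeroB) simp
  show ?thesis
  proof (cases "xs = []")
    case True
    then show ?thesis unfolding ubr_def using z[of 0] by simp
  next
    case False
    then have n: "?n \<ge> 1" by (cases xs) auto
    have "ubr F one xs = ?g (?n - 1) + (\<Sum>p\<in>{..?n} - {?n - 1}. ?g p)"
      unfolding ubr_def by (rule sum.remove) auto
    also have "(\<Sum>p\<in>{..?n} - {?n - 1}. ?g p) = 0"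
    proof (rule sum.neutral, rule ballI)
      fix p assume "p \<in> {..?n} - {?n - 1}"
      then have "?n - p \<noteq> 1" using n by auto
      then show "?g p = 0" by (rule z)
    qed
    also have "?g (?n - 1) = ebr (?n - 1) 1 (comp (?n - 1) F) one xs"
      using n comp_one_1 by simp
    finally show ?thesis using False by simp
  qed
qed

lemma Sspan_closed: "F \<in> Sspan \<Longrightarrow> ubr F one \<in> Sspan"
proof (induction rule: Sspan.induct)
  case zero
  have "ubr (\<lambda>_. 0) one = (\<lambda>_. 0)"
    by (rule ext) (simp add: ubr_one, intro impI ebr_zeroA, simp add: comp_def)
  then show ?case using Sspan.zero by simp
next
  case (sym p A)
  have "ubr A one = ebr p 1 A one"
  proof
    fix xs
    show "ubr A one xs = ebr p 1 A one xs"
    proof (cases "length xs = Suc p")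
      case True
      have "comp p A = A" using is_op_len[OF sym(1)] by (auto simp: comp_def fun_eq_iff)
      then show ?thesis using True by (auto simp: ubr_one)
    next
      case False
      show ?thesis
      proof (cases "xs = []")
        case True then show ?thesis by (simp add: ubr_one ebr_len)
      next
        case ne: False
        then have "length xs - 1 \<noteq> p" using False by (cases xs) auto
        then have "ebr (length xs - 1) 1 (comp (length xs - 1) A) one xs = 0"
          by (intro ebr_zeroA) (auto simp: comp_def is_op_len[OF sym(1)])
        then show ?thesis using False by (simp add: ubr_one ebr_len)
      qed
    qed
  qed
  then show ?case using Sspan.sym[OF is_op_R[OF sym(1)] sym_R[OF sym(1,2)]] by simp
next
  case (add A B)
  have "ubr (\<lambda>xs. A xs + B xs) one = (\<lambda>xs. ubr A one xs + ubr B one xs)"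
    by (rule ext) (simp add: ubr_one, intro impI ebr_addA, simp add: comp_def)
  then show ?case using Sspan.add[OF add(3,4)] by simp
next
  case (smult A c)
  have "ubr (\<lambda>xs. scale c (A xs)) one = (\<lambda>xs. scale c (ubr A one xs))"
    by (rule ext) (simp add: ubr_one, intro impI ebr_scaleA, simp add: comp_def)
  then show ?case using Sspan.smult[OF smult(2)] by simp
qed

lemma iter_closed: "A \<in> Sspan \<Longrightarrow> iter_one A k \<in> Sspan"
  by (induction k) (simp_all add: iter_one_def Sspan_closed)

end

theorem proposition4p4:
  fixes scale :: "'k::field_char_0 \<Rightarrow> 'v::ab_group_add \<Rightarrow> 'v"
    and Ev Od :: "'v set" and lb :: "'v \<Rightarrow> 'v \<Rightarrow> 'v"
    and A :: "'v list \<Rightarrow> 'v" and k :: nat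
  assumes "lie_superalgebra scale Ev Od lb"
    and "A \<in> lie_superalgebra.Sspan scale Ev Od"
    and "k \<ge> 1"
  shows "lie_superalgebra.iter_one scale Ev Od lb A k \<in> lie_superalgebra.Sspan scale Ev Od"
proof -
  interpret L: lie_superalgebra scale Ev Od lb by fact
  show ?thesis using L.iter_closed[OF assms(2)] .
qed

end
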